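(* Let $n\ge1$, let $\alpha_0,\ldots,\alpha_{2n+1}\in\mathbb{C}$ with $\sum_{i=0}^{2n+1}\alpha_i=1$, and assume \[ \alpha_{2i}^{2j-1}\notin\mathbb{Z},\quad \sum_{i=0}^n\alpha_{2i+1}\notin\mathbb{Z},\quad \alpha_{2i-1}^{2j-1}\notin\mathbb{Z}\qquad(i=1,\ldots,n,\ j=1,\ldots,n-i+1). \] Suppose $\mathbf{x}={}^t(x_0,\ldots,x_n)$ satisfies \[ \frac{d\mathbf{x}}{dt}=\Big(\frac{A_0}{t}+\frac{A_1}{1-t}\Big)\mathbf{x},\qquad A_0=\sum_{i=0}^{n-1}\big(-\alpha_{2i+2}^{2n-2i-1}\big)E_{i,i}+\sum_{i=0}^{n-1}\sum_{j=i+1}^{n}\alpha_{2j+1}E_{i,j},\quad A_1=\sum_{i=0}^{n}\sum_{j=0}^{n}\alpha_{2j+1}E_{i,j}. \] Then for each $i=0,\ldots,n$, the component $x=x_i$ satisfies the generalized hypergeometric equation \[ \big[\delta(\delta+b_1-1)\cdots(\delta+b_n-1)-t(\delta+a_0)(\delta+a_1)\cdots(\delta+a_n)\big]x=0,\qquad \delta=t\frac{d}{dt}, \] with $a_0=\alpha_1^{2n}$; $a_j=1+\alpha_{2n-2j+3}^{2j-2}$, $b_j=1+\alpha_{2n-2j+2}^{2j-1}$ for $j=1,\ldots,n-i$; and $a_j=\alpha_{2n-2j+3}^{2j-2}$, $b_j=\alpha_{2n-2j+2}^{2j-1}$ for $j=n-i+1,\ldots,n$.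
   Context: Indices of the parameters $\alpha_i$ are taken modulo $2n+2$. For integers $k,l$, $\alpha_k^l=0$ if $l<0$ and $\alpha_k^l=\sum_{i=k}^{k+l}\alpha_i$ if $l\ge0$. $E_{i,j}=(\delta_{i,k}\delta_{j,l})_{k,l=0}^{n}$ is the $(n+1)\times(n+1)$ matrix unit. *)

theory Defs
  imports "HOL-Analysis.Analysis"
begin

definition aidx :: "nat \<Rightarrow> (nat \<Rightarrow> complex) \<Rightarrow> int \<Rightarrow> complex" where
  "aidx n \<alpha> k = \<alpha> (nat (k mod (2 * int n + 2)))"

text \<open>alpha_k^l: zero if l < 0, otherwise sum of alpha_i for i = k..k+l.\<close>
definition asum :: "nat \<Rightarrow> (nat \<Rightarrow> complex) \<Rightarrow> int \<Rightarrow> int \<Rightarrow> complex" where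
  "asum n \<alpha> k l = (if l < 0 then 0 else (\<Sum>i\<in>{k..k+l}. aidx n \<alpha> i))"

definition A0 :: "nat \<Rightarrow> (nat \<Rightarrow> complex) \<Rightarrow> nat \<Rightarrow> nat \<Rightarrow> complex" where
  "A0 n \<alpha> i j =
     (if i = j \<and> i < n then - asum n \<alpha> (2 * int i + 2) (2 * int n - 2 * int i - 1) else 0)
   + (if i < n \<and> i < j \<and> j \<le> n then aidx n \<alpha> (2 * int j + 1) else 0)"

definition A1 :: "nat \<Rightarrow> (nat \<Rightarrow> complex) \<Rightarrow> nat \<Rightarrow> nat \<Rightarrow> complex" where
  "A1 n \<alpha> i j = aidx n \<alpha> (2 * int j + 1)"

definition theta :: "complex \<Rightarrow> (complex \<Rightarrow> complex) \<Rightarrow> complex \<Rightarrow> complex" where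
  "theta c f = (\<lambda>t. t * deriv f t + c * f t)"

definition theta_prod :: "complex list \<Rightarrow> (complex \<Rightarrow> complex) \<Rightarrow> complex \<Rightarrow> complex" where
  "theta_prod cs f = foldr theta cs f"

definition hg_a :: "nat \<Rightarrow> (nat \<Rightarrow> complex) \<Rightarrow> nat \<Rightarrow> nat \<Rightarrow> complex" where
  "hg_a n \<alpha> i j =
     (if j = 0 then asum n \<alpha> 1 (2 * int n)
      else if j \<le> n - i then 1 + asum n \<alpha> (2 * int n - 2 * int j + 3) (2 * int j - 2)
      else asum n \<alpha> (2 * int n - 2 * int j + 3) (2 * int j - 2))"

definition hg_b :: "nat \<Rightarrow> (nat \<Rightarrow> complex) \<Rightarrow> nat \<Rightarrow> nat \<Rightarrow> complex" where
  "hg_b n \<alpha> i j =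
     (if j \<le> n - i then 1 + asum n \<alpha> (2 * int n - 2 * int j + 2) (2 * int j - 1)
      else asum n \<alpha> (2 * int n - 2 * int j + 2) (2 * int j - 1))"

end

theory Submission imports Defs "HOL-Complex_Analysis.Cauchy_Integral_Formula" begin

definition eqU :: "complex set \<Rightarrow> (complex\<Rightarrow>complex) \<Rightarrow> (complex\<Rightarrow>complex) \<Rightarrow> bool" where
  "eqU U f g \<longleftrightarrow> (\<forall>t\<in>U. f t = g t)"

lemma eqU_refl[simp]: "eqU U f f" by (simp add: eqU_def)
lemma eqU_sym: "eqU U f g \<Longrightarrow> eqU U g f" by (simp add: eqU_def)
lemma eqU_trans[trans]: "eqU U f g \<Longrightarrow> eqU U g h \<Longrightarrow> eqU U f h" by (simp add: eqU_def)
lemma eqU_eq_trans[trans]: "eqU U f g \<Longrightarrow> g = h \<Longrightarrow> eqU U f h" by simp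
lemma eq_eqU_trans[trans]: "f = g \<Longrightarrow> eqU U g h \<Longrightarrow> eqU U f h" by simp

lemma theta_cong:
  assumes "open U" "eqU U f g" shows "eqU U (theta c f) (theta c g)"
  unfolding eqU_def theta_def
proof
  fix t assume t: "t \<in> U"
  have ev: "eventually (\<lambda>y. f y = g y) (nhds t)"
    using assms t unfolding eqU_def eventually_nhds by blast
  have "deriv f t = deriv g t" by (rule deriv_cong_ev[OF ev refl])
  then show "t * deriv f t + c * f t = t * deriv g t + c * g t"
    using assms t by (simp add: eqU_def)
qed

lemma tp_Cons[simp]: "theta_prod (c # cs) f = theta c (theta_prod cs f)"
  by (simp add: theta_prod_def)
lemma tp_Nil[simp]: "theta_prod [] f = f"
  by (simp add: theta_prod_def)
lemma tp_append: "theta_prod (cs @ ds) f = theta_prod cs (theta_prod ds f)"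
  by (simp add: theta_prod_def)

lemma tp_cong: "open U \<Longrightarrow> eqU U f g \<Longrightarrow> eqU U (theta_prod cs f) (theta_prod cs g)"
  by (induction cs) (auto intro: theta_cong)

lemma theta_holo: "open U \<Longrightarrow> f holomorphic_on U \<Longrightarrow> theta c f holomorphic_on U"
  unfolding theta_def by (intro holomorphic_intros) auto

lemma tp_holo: "open U \<Longrightarrow> f holomorphic_on U \<Longrightarrow> theta_prod cs f holomorphic_on U"
  by (induction cs) (auto intro: theta_holo)

lemma holo_deriv_at:
  assumes "open U" "f holomorphic_on U" "t \<in> U"
  shows "(f has_field_derivative deriv f t) (at t)"
  using assms by (meson DERIV_deriv_iff_field_differentiable holomorphic_on_imp_differentiable_at)

lemma theta_comm:
  assumes U: "open U" and f: "f holomorphic_on U"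
  shows "eqU U (theta c (theta d f)) (theta d (theta c f))"
  unfolding eqU_def
proof
  fix t assume t: "t \<in> U"
  have d1: "(f has_field_derivative deriv f t) (at t)" by (rule holo_deriv_at[OF U f t])
  have d2: "(deriv f has_field_derivative deriv (deriv f) t) (at t)"
    by (rule holo_deriv_at[OF U holomorphic_deriv[OF f U] t])
  have "\<And>e. deriv (\<lambda>t. t * deriv f t + e * f t) t = deriv f t + t * deriv (deriv f) t + e * deriv f t"
  proof -
    fix e
    show "deriv (\<lambda>t. t * deriv f t + e * f t) t = deriv f t + t * deriv (deriv f) t + e * deriv f t"
      using DERIV_imp_deriv[OF DERIV_add[OF DERIV_mult'[OF DERIV_ident d2] DERIV_cmult[OF d1, of e]]]
      by (simp add: algebra_simps)
  qed
  then show "theta c (theta d f) t = theta d (theta c f) t"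
    unfolding theta_def by (simp add: algebra_simps)
qed

lemma theta_mult_t:
  assumes U: "open U" and f: "f holomorphic_on U"
  shows "eqU U (theta c (\<lambda>t. t * f t)) (\<lambda>t. t * theta (c+1) f t)"
  unfolding eqU_def
proof
  fix t assume t: "t \<in> U"
  have d1: "(f has_field_derivative deriv f t) (at t)" by (rule holo_deriv_at[OF U f t])
  have "deriv (\<lambda>t. t * f t) t = f t + t * deriv f t"
    using DERIV_imp_deriv[OF DERIV_mult'[OF DERIV_ident d1]] by (simp add: algebra_simps)
  then show "theta c (\<lambda>t. t * f t) t = t * theta (c + 1) f t"
    unfolding theta_def by (simp add: algebra_simps)
qed

lemma tp_mult_t:
  assumes U: "open U" and f: "f holomorphic_on U"
  shows "eqU U (theta_prod cs (\<lambda>t. t * f t)) (\<lambda>t. t * theta_prod (map (\<lambda>c. c+1) cs) f t)"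
proof (induction cs)
  case Nil then show ?case by simp
next
  case (Cons c cs)
  have "eqU U (theta_prod (c # cs) (\<lambda>t. t * f t)) (theta c (\<lambda>t. t * theta_prod (map (\<lambda>c. c+1) cs) f t))"
    using Cons theta_cong[OF U] by simp
  also have "eqU U \<dots> (\<lambda>t. t * theta (c+1) (theta_prod (map (\<lambda>c. c+1) cs) f) t)"
    by (rule theta_mult_t[OF U tp_holo[OF U f]])
  finally show ?case by simp
qed

lemma tp_comm:
  assumes U: "open U" and f: "f holomorphic_on U"
  shows "eqU U (theta c (theta_prod cs f)) (theta_prod cs (theta c f))"
proof (induction cs)
  case Nil then show ?case by simp
next
  case (Cons d cs)
  have "eqU U (theta c (theta_prod (d # cs) f)) (theta d (theta c (theta_prod cs f)))"
    using theta_comm[OF U tp_holo[OF U f]] by simp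
  also have "eqU U \<dots> (theta d (theta_prod cs (theta c f)))"
    by (rule theta_cong[OF U Cons])
  finally show ?case by simp
qed

lemma tp_perm:
  assumes U: "open U"
  shows "f holomorphic_on U \<Longrightarrow> mset cs = mset ds \<Longrightarrow> eqU U (theta_prod cs f) (theta_prod ds f)"
proof (induction cs arbitrary: ds f)
  case Nil then show ?case by simp
next
  case (Cons c cs)
  note f = Cons.prems(1)
  have "c \<in> set ds" using Cons.prems by (metis list.set_intros(1) set_mset_mset)
  then obtain ds1 ds2 where ds: "ds = ds1 @ c # ds2" by (meson split_list)
  have m: "mset cs = mset (ds1 @ ds2)" using Cons.prems ds by simp
  have "eqU U (theta_prod (c # cs) f) (theta_prod cs (theta c f))"
    using tp_comm[OF U f] by simp
  also have "eqU U \<dots> (theta_prod (ds1 @ ds2) (theta c f))"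
    by (rule Cons.IH[OF theta_holo[OF U f] m])
  also have "\<dots> = theta_prod ds1 (theta_prod ds2 (theta c f))" by (simp add: tp_append)
  also have "eqU U \<dots> (theta_prod ds1 (theta c (theta_prod ds2 f)))"
    by (rule tp_cong[OF U eqU_sym[OF tp_comm[OF U f]]])
  also have "\<dots> = theta_prod ds f" by (simp add: ds tp_append)
  finally show ?case .
qed

lemma eqU_mult: "eqU U f g \<Longrightarrow> eqU U (\<lambda>t. t * f t) (\<lambda>t. t * g t)"
  by (simp add: eqU_def)

lemma upt_split: "i \<le> j \<Longrightarrow> j \<le> k \<Longrightarrow> [i..<k] = [i..<j] @ [j..<k]"
  by (metis le_add_diff_inverse upt_add_eq_append)

lemma map_upt_rev: "map f [Suc 0..<Suc n] = rev (map (\<lambda>k. f (Suc n - k)) [Suc 0..<Suc n])"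
  by (rule nth_equalityI) (simp_all del: upt_Suc add: rev_nth)

lemma asum_step: "0 \<le> l \<Longrightarrow> asum n \<alpha> k l = aidx n \<alpha> k + asum n \<alpha> (k+1) (l-1)"
proof (cases "l = 0")
  case True then show ?thesis by (simp add: asum_def)
next
  case False
  assume "0 \<le> l"
  with False have "{k..k+l} = insert k {k+1..k+1+(l-1)}" by auto
  then show ?thesis using False \<open>0 \<le> l\<close> by (simp add: asum_def)
qed

theorem corollary3p2:
  fixes n :: nat and \<alpha> :: "nat \<Rightarrow> complex"
    and x :: "nat \<Rightarrow> complex \<Rightarrow> complex" and U :: "complex set"
  assumes n: "n \<ge> 1"
    and sum1: "(\<Sum>i\<le>2*n+1. \<alpha> i) = 1"
    and h1: "\<And>i j. 1 \<le> i \<Longrightarrow> i \<le> n \<Longrightarrow> 1 \<le> j \<Longrightarrow> j \<le> n - i + 1 \<Longrightarrow>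
               asum n \<alpha> (2 * int i) (2 * int j - 1) \<notin> \<int>"
    and h2: "(\<Sum>i\<le>n. \<alpha> (2*i+1)) \<notin> \<int>"
    and h3: "\<And>i j. 1 \<le> i \<Longrightarrow> i \<le> n \<Longrightarrow> 1 \<le> j \<Longrightarrow> j \<le> n - i + 1 \<Longrightarrow>
               asum n \<alpha> (2 * int i - 1) (2 * int j - 1) \<notin> \<int>"
    and U: "open U" "0 \<notin> U" "1 \<notin> U"
    and ode: "\<And>k t. k \<le> n \<Longrightarrow> t \<in> U \<Longrightarrow>
               (x k has_field_derivative
                  (\<Sum>j\<le>n. (A0 n \<alpha> k j / t + A1 n \<alpha> k j / (1 - t)) * x j t)) (at t)"
  shows "\<forall>i\<le>n. \<forall>t\<in>U.
           theta_prod (0 # map (\<lambda>j. hg_b n \<alpha> i j - 1) [1..<n+1]) (x i) t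
           - t * theta_prod (map (hg_a n \<alpha> i) [0..<n+1]) (x i) t = 0"
proof -
  define \<beta> where "\<beta> j = aidx n \<alpha> (2*int j+1)" for j
  define g where "g k = asum n \<alpha> (2*int k+2) (2*int n - 2*int k - 1)" for k
  define g' where "g' k = asum n \<alpha> (2*int k+1) (2*int n - 2*int k)" for k
  define S where "S t = (\<Sum>j\<le>n. \<beta> j * x j t)" for t
  define G where "G k t = (\<Sum>j\<in>{k<..n}. \<beta> j * x j t) + t/(1-t) * S t" for k t
  have oU: "open U" by (rule U(1))
  have holo: "x k holomorphic_on U" if "k \<le> n" for k
    using ode[OF that] oU by (auto simp: holomorphic_on_open)
  have gn: "g n = 0" by (simp add: g_def asum_def)
  have theta_add: "theta (c+d) f t = theta c f t + d * f t" for c d f t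
    by (simp add: theta_def algebra_simps)
  have TG: "theta (g k) (x k) t = G k t" if k: "k \<le> n" and t: "t \<in> U" for k t
  proof -
    have t0: "t \<noteq> 0" and t1: "1 - t \<noteq> 0" using t U by auto
    have "t * deriv (x k) t = (\<Sum>j\<le>n. t * ((A0 n \<alpha> k j / t + A1 n \<alpha> k j / (1 - t)) * x j t))"
      using DERIV_imp_deriv[OF ode[OF k t]] by (simp add: sum_distrib_left)
    also have "\<dots> = (\<Sum>j\<le>n. A0 n \<alpha> k j * x j t + t/(1-t) * (\<beta> j * x j t))"
      by (rule sum.cong) (use t0 t1 in \<open>auto simp: field_simps A1_def \<beta>_def\<close>)
    also have "\<dots> = (\<Sum>j\<le>n. A0 n \<alpha> k j * x j t) + t/(1-t) * S t"
      by (simp add: sum.distrib sum_distrib_left S_def)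
    finally have e1: "t * deriv (x k) t = (\<Sum>j\<le>n. A0 n \<alpha> k j * x j t) + t/(1-t) * S t" .
    have "(\<Sum>j\<le>n. A0 n \<alpha> k j * x j t) =
          (\<Sum>j\<le>n. (if k = j \<and> k < n then - g k else 0) * x j t)
        + (\<Sum>j\<le>n. (if k < n \<and> k < j \<and> j \<le> n then \<beta> j else 0) * x j t)"
      unfolding A0_def g_def \<beta>_def by (simp add: sum.distrib distrib_right)
    also have "(\<Sum>j\<le>n. (if k = j \<and> k < n then - g k else 0) * x j t) = - g k * x k t"
    proof -
      have "(\<Sum>j\<le>n. (if k = j \<and> k < n then - g k else 0) * x j t)
          = (\<Sum>j\<le>n. if j = k then (if k < n then - g k else 0) * x k t else 0)"
        by (rule sum.cong) auto
      also have "\<dots> = (if k < n then - g k else 0) * x k t" using k by simp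
      finally show ?thesis using gn k by auto
    qed
    also have "(\<Sum>j\<le>n. (if k < n \<and> k < j \<and> j \<le> n then \<beta> j else 0) * x j t)
             = (\<Sum>j\<in>{k<..n}. \<beta> j * x j t)"
      by (rule sum.mono_neutral_cong_right) auto
    finally show ?thesis using e1 by (simp add: theta_def G_def)
  qed
  have Gstep: "G k t = \<beta> (Suc k) * x (Suc k) t + G (Suc k) t" if "k < n" for k t
  proof -
    have "{k<..n} = insert (Suc k) {Suc k<..n}" using that by auto
    then show ?thesis by (simp add: G_def)
  qed
  have gg: "g' (Suc k) = g (Suc k) + \<beta> (Suc k)" if "k < n" for k
  proof -
    have "g' (Suc k) = aidx n \<alpha> (2 * int (Suc k) + 1) + asum n \<alpha> (2 * int (Suc k) + 1 + 1) (2 * int n - 2 * int (Suc k) - 1)"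
      unfolding g'_def using that by (subst asum_step) (auto simp: algebra_simps)
    also have "\<dots> = g (Suc k) + \<beta> (Suc k)"
      unfolding g_def \<beta>_def by (simp add: algebra_simps)
    finally show ?thesis .
  qed
  have a0: "hg_a n \<alpha> i 0 = g 0 + \<beta> 0" for i
  proof -
    have "hg_a n \<alpha> i 0 = aidx n \<alpha> 1 + asum n \<alpha> (1 + 1) (2 * int n - 1)"
      unfolding hg_a_def by (subst asum_step) auto
    then show ?thesis by (simp add: g_def \<beta>_def)
  qed
  have R1: "eqU U (theta (g k) (x k)) (theta (g' (Suc k)) (x (Suc k)))" if k: "k < n" for k
    unfolding eqU_def
  proof
    fix t assume t: "t \<in> U"
    have "theta (g' (Suc k)) (x (Suc k)) t = G (Suc k) t + \<beta> (Suc k) * x (Suc k) t"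
      using gg[OF k] theta_add TG[OF _ t, of "Suc k"] k by simp
    also have "\<dots> = theta (g k) (x k) t" using Gstep[OF k] TG[OF _ t, of k] k by simp
    finally show "theta (g k) (x k) t = theta (g' (Suc k)) (x (Suc k)) t" by simp
  qed
  have R2: "eqU U (theta 0 (x n)) (\<lambda>t. t * theta (g 0 + \<beta> 0) (x 0) t)"
    unfolding eqU_def
  proof
    fix t assume t: "t \<in> U"
    have t1: "1 - t \<noteq> 0" using t U by auto
    have "theta 0 (x n) t = t/(1-t) * S t" using TG[OF order.refl t] gn by (simp add: G_def)
    moreover have "theta (g 0 + \<beta> 0) (x 0) t = S t + t/(1-t) * S t"
    proof -
      have "{..n} = insert 0 {0<..n}" by auto
      then have "S t = \<beta> 0 * x 0 t + (\<Sum>j\<in>{0<..n}. \<beta> j * x j t)" by (simp add: S_def)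
      then show ?thesis using theta_add TG[OF _ t, of 0] by (simp add: G_def)
    qed
    moreover have "t/(1-t) * S t = t * (S t + t/(1-t) * S t)"
      using t1 by (simp add: field_simps)
    ultimately show "theta 0 (x n) t = t * theta (g 0 + \<beta> 0) (x 0) t"
      by simp
  qed
  have C1: "eqU U (theta_prod (map g [i..<n]) (x i)) (theta_prod (map g' [Suc i..<Suc n]) (x n))"
    if "i \<le> n" for i
    using that
  proof (induction i rule: inc_induct)
    case base then show ?case by simp
  next
    case (step i)
    have hi: "x i holomorphic_on U" "x (Suc i) holomorphic_on U" using step.hyps holo by auto
    have "theta_prod (map g [i..<n]) (x i) = theta (g i) (theta_prod (map g [Suc i..<n]) (x i))"
      using step.hyps by (simp add: upt_conv_Cons)
    also have "eqU U \<dots> (theta_prod (map g [Suc i..<n]) (theta (g i) (x i)))"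
      by (rule tp_comm[OF oU hi(1)])
    also have "eqU U \<dots> (theta_prod (map g [Suc i..<n]) (theta (g' (Suc i)) (x (Suc i))))"
      by (rule tp_cong[OF oU R1[OF step.hyps(2)]])
    also have "eqU U \<dots> (theta (g' (Suc i)) (theta_prod (map g [Suc i..<n]) (x (Suc i))))"
      by (rule eqU_sym[OF tp_comm[OF oU hi(2)]])
    also have "eqU U \<dots> (theta (g' (Suc i)) (theta_prod (map g' [Suc (Suc i)..<Suc n]) (x n)))"
      by (rule theta_cong[OF oU step.IH])
    also have "\<dots> = theta_prod (map g' [Suc i..<Suc n]) (x n)"
      using step.hyps by (simp add: upt_conv_Cons del: upt_Suc)
    finally show ?case .
  qed
  have C2: "eqU U (theta_prod (map g [0..<i]) (x 0)) (theta_prod (map g' [1..<Suc i]) (x i))"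
    if "i \<le> n" for i
    using that
  proof (induction i)
    case 0 then show ?case by simp
  next
    case (Suc i)
    have i: "i < n" using Suc.prems by simp
    have hi: "x 0 holomorphic_on U" "x i holomorphic_on U" using i holo by auto
    have "theta_prod (map g [0..<Suc i]) (x 0) = theta_prod (map g [0..<i]) (theta (g i) (x 0))"
      by (simp add: tp_append)
    also have "eqU U \<dots> (theta (g i) (theta_prod (map g [0..<i]) (x 0)))"
      by (rule eqU_sym[OF tp_comm[OF oU hi(1)]])
    also have "eqU U \<dots> (theta (g i) (theta_prod (map g' [1..<Suc i]) (x i)))"
      by (rule theta_cong[OF oU Suc.IH]) (use i in simp)
    also have "eqU U \<dots> (theta_prod (map g' [1..<Suc i]) (theta (g i) (x i)))"
      by (rule tp_comm[OF oU hi(2)])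
    also have "eqU U \<dots> (theta_prod (map g' [1..<Suc i]) (theta (g' (Suc i)) (x (Suc i))))"
      by (rule tp_cong[OF oU R1[OF i]])
    also have "\<dots> = theta_prod (map g' [1..<Suc (Suc i)]) (x (Suc i))"
      by (simp add: tp_append)
    finally show ?case .
  qed
  have hb1: "hg_b n \<alpha> i (n - k) = g k" if "k < i" "i \<le> n" for i k
  proof -
    have "\<not> (n - k \<le> n - i)" using that by linarith
    moreover have "int (n - k) = int n - int k" using that by simp
    ultimately show ?thesis using that by (simp add: hg_b_def g_def)
  qed
  have hb2: "hg_b n \<alpha> i (n - k) - 1 = g k" if "i \<le> k" "k < n" for i k
  proof -
    have "n - k \<le> n - i" using that by linarith
    moreover have "int (n - k) = int n - int k" using that by simp
    ultimately show ?thesis using that by (simp add: hg_b_def g_def)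
  qed
  have ha1: "hg_a n \<alpha> i (Suc n - k) = g' k" if "1 \<le> k" "k \<le> i" "i \<le> n" for i k
  proof -
    have "\<not> (Suc n - k \<le> n - i)" "Suc n - k \<noteq> 0" using that by linarith+
    moreover have "int (Suc n - k) = int n + 1 - int k" using that by simp
    ultimately show ?thesis using that by (simp add: hg_a_def g'_def algebra_simps)
  qed
  have ha2: "hg_a n \<alpha> i (Suc n - k) = g' k + 1" if "i < k" "k \<le> n" for i k
  proof -
    have "Suc n - k \<le> n - i" "Suc n - k \<noteq> 0" using that by linarith+
    moreover have "int (Suc n - k) = int n + 1 - int k" using that by simp
    ultimately show ?thesis using that by (simp add: hg_a_def g'_def algebra_simps)
  qed
  show ?thesis
  proof (intro allI impI ballI)
    fix i t assume i: "i \<le> n" and t: "t \<in> U"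
    define L1 where "L1 = map (\<lambda>k. g k - 1) [0..<i]"
    define L2 where "L2 = map g [i..<n]"
    define M2 where "M2 = map g' [Suc i..<Suc n]"
    define M2p where "M2p = map (\<lambda>k. g' k + 1) [Suc i..<Suc n]"
    define M1 where "M1 = map g' [1..<Suc i]"
    define L0 where "L0 = map g [0..<i]"
    define a where "a = g 0 + \<beta> 0"
    define F where "F = theta a (x 0)"
    have hx: "x i holomorphic_on U" "x n holomorphic_on U" "x 0 holomorphic_on U"
      using holo i by auto
    have mapS: "map f [Suc m..<Suc p] = map (\<lambda>k. f (Suc k)) [m..<p]" for f :: "nat \<Rightarrow> complex" and m p
      by (simp add: map_Suc_upt[symmetric] del: upt_Suc)
    have P1: "mset (0 # map (\<lambda>j. hg_b n \<alpha> i j - 1) [1..<n+1]) = mset (0 # L1 @ L2)"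
    proof -
      have "map (\<lambda>j. hg_b n \<alpha> i j - 1) [1..<n+1]
          = rev (map (\<lambda>k. hg_b n \<alpha> i (Suc n - k) - 1) ([Suc 0..<Suc i] @ [Suc i..<Suc n]))"
        using map_upt_rev[of "\<lambda>j. hg_b n \<alpha> i j - 1" n] upt_split[of "Suc 0" "Suc i" "Suc n"] i
        by (simp del: upt_Suc)
      also have "map (\<lambda>k. hg_b n \<alpha> i (Suc n - k) - 1) ([Suc 0..<Suc i] @ [Suc i..<Suc n]) = L1 @ L2"
        unfolding L1_def L2_def map_append mapS using i
        by (auto intro!: map_cong hb1 hb2 simp del: upt_Suc)
      finally show ?thesis by simp
    qed
    have P2: "mset (map (hg_a n \<alpha> i) [0..<n+1]) = mset (a # M2p @ M1)"
    proof -
      have "map (hg_a n \<alpha> i) [0..<n+1] = hg_a n \<alpha> i 0 # map (hg_a n \<alpha> i) [Suc 0..<Suc n]"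
        by (simp add: upt_conv_Cons del: upt_Suc)
      also have "map (hg_a n \<alpha> i) [Suc 0..<Suc n]
          = rev (map (\<lambda>k. hg_a n \<alpha> i (Suc n - k)) ([Suc 0..<Suc i] @ [Suc i..<Suc n]))"
        using map_upt_rev[of "hg_a n \<alpha> i" n] upt_split[of "Suc 0" "Suc i" "Suc n"] i
        by (simp del: upt_Suc)
      also have "map (\<lambda>k. hg_a n \<alpha> i (Suc n - k)) ([Suc 0..<Suc i] @ [Suc i..<Suc n]) = M1 @ M2p"
        unfolding M1_def M2p_def map_append using i
        by (auto intro!: map_cong ha1 ha2 simp del: upt_Suc)
      finally show ?thesis by (simp add: a0 a_def)
    qed
    have Q: "eqU U (theta_prod (L0 @ M2p) F) (theta_prod ((a # M2p) @ M1) (x i))"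
    proof -
      have "theta_prod (L0 @ M2p) F = theta_prod ((L0 @ M2p) @ [a]) (x 0)"
        by (simp add: tp_append F_def)
      also have "eqU U \<dots> (theta_prod ((a # M2p) @ L0) (x 0))"
        by (rule tp_perm[OF oU hx(3)]) simp
      also have "\<dots> = theta_prod (a # M2p) (theta_prod L0 (x 0))" by (simp add: tp_append)
      also have "eqU U \<dots> (theta_prod (a # M2p) (theta_prod M1 (x i)))"
        unfolding L0_def M1_def by (rule tp_cong[OF oU C2[OF i]])
      also have "\<dots> = theta_prod ((a # M2p) @ M1) (x i)" by (simp add: tp_append)
      finally show ?thesis .
    qed
    have "eqU U (theta_prod (0 # map (\<lambda>j. hg_b n \<alpha> i j - 1) [1..<n+1]) (x i))
                (theta_prod ((0 # L1) @ L2) (x i))"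
      by (rule tp_perm[OF oU hx(1)]) (use P1 in simp)
    also have "\<dots> = theta_prod (0 # L1) (theta_prod L2 (x i))" by (simp add: tp_append)
    also have "eqU U \<dots> (theta_prod (0 # L1) (theta_prod M2 (x n)))"
      unfolding L2_def M2_def by (rule tp_cong[OF oU C1[OF i]])
    also have "\<dots> = theta_prod (0 # L1 @ M2) (x n)" by (simp add: tp_append)
    also have "eqU U \<dots> (theta_prod ((L1 @ M2) @ [0]) (x n))"
      by (rule tp_perm[OF oU hx(2)]) simp
    also have "\<dots> = theta_prod (L1 @ M2) (theta 0 (x n))" by (simp add: tp_append)
    also have "eqU U \<dots> (theta_prod (L1 @ M2) (\<lambda>t. t * F t))"
      unfolding F_def a_def by (rule tp_cong[OF oU R2])
    also have "eqU U \<dots> (\<lambda>t. t * theta_prod (map (\<lambda>c. c+1) (L1 @ M2)) F t)"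
      by (rule tp_mult_t[OF oU]) (unfold F_def, rule theta_holo[OF oU hx(3)])
    also have "map (\<lambda>c. c+1) (L1 @ M2) = L0 @ M2p"
      by (simp add: L1_def M2_def L0_def M2p_def del: upt_Suc)
    also have "eqU U (\<lambda>t. t * theta_prod (L0 @ M2p) F t) (\<lambda>t. t * theta_prod ((a # M2p) @ M1) (x i) t)"
      by (rule eqU_mult[OF Q])
    also have "eqU U \<dots> (\<lambda>t. t * theta_prod (map (hg_a n \<alpha> i) [0..<n+1]) (x i) t)"
      by (rule eqU_mult[OF tp_perm[OF oU hx(1)]]) (use P2 in simp)
    finally show "theta_prod (0 # map (\<lambda>j. hg_b n \<alpha> i j - 1) [1..<n+1]) (x i) t
           - t * theta_prod (map (hg_a n \<alpha> i) [0..<n+1]) (x i) t = 0"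
      using t by (simp add: eqU_def)
  qed
qed

end
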